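(* Let $K\in\mathbb{N}$ and $f_1,\dots,f_K\in\mathcal{S}'(\mathbb{Z}^{d})$. Define $d:\mathbb{Z}^d\to\mathbb{C}$ by $d(\mathbf{n})=\max\{|f_1(\mathbf{n})|,\dots,|f_K(\mathbf{n})|\}$. Then $d\in\mathcal{S}'(\mathbb{Z}^{d})$ and $d$ is a greatest common divisor of $f_1,\dots,f_K$ in $\mathcal{S}'(\mathbb{Z}^{d})$: $d$ divides each $f_k$, and every common divisor $\tilde d\in\mathcal{S}'(\mathbb{Z}^{d})$ of $f_1,\dots,f_K$ divides $d$. (In particular every finite family has a gcd, unique up to invertible factors.)
   Context: For $\mathbf{n}=(n_1,\dots,n_d)\in\mathbb{Z}^d$ write $\|\mathbf{n}\|:=|n_1|+\cdots+|n_d|$. $\mathcal{S}'(\mathbb{Z}^{d})$ denotes the set of all maps $f:\mathbb{Z}^d\to\mathbb{C}$ of at most polynomial growth, i.e. for which there exist a real $M>0$ and an integer $m\geq 0$ with $|f(\mathbf{n})|\leq M(1+\|\mathbf{n}\|)^m$ for all $\mathbf{n}\in\mathbb{Z}^d$. It is a commutative unital ring under pointwise addition and multiplication, with unit the constant function $1$. Divisibility refers to this ring. *)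

theory Defs
  imports "HOL-Analysis.Analysis"
begin

text \<open>Lattice points in Z^d are modelled as functions 'd \<Rightarrow> int with 'd a finite index type
  (d = CARD('d)).\<close>

definition l1norm :: "('d::finite \<Rightarrow> int) \<Rightarrow> real" where
  "l1norm n = (\<Sum>i\<in>UNIV. real_of_int \<bar>n i\<bar>)"

definition tempered :: "(('d::finite \<Rightarrow> int) \<Rightarrow> complex) \<Rightarrow> bool" where
  "tempered f \<longleftrightarrow> (\<exists>M::real. M > 0 \<and> (\<exists>m::nat. \<forall>n. cmod (f n) \<le> M * (1 + l1norm n) ^ m))"

definition sdvd :: "(('d::finite \<Rightarrow> int) \<Rightarrow> complex) \<Rightarrow> (('d \<Rightarrow> int) \<Rightarrow> complex) \<Rightarrow> bool" where
  "sdvd a b \<longleftrightarrow> (\<exists>c. tempered c \<and> (\<forall>n. b n = a n * c n))"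

end

theory Submission
  imports Defs
begin

lemma l1norm_nonneg: "l1norm n \<ge> 0"
  unfolding l1norm_def by (simp add: sum_nonneg)

lemma tempered_dom:
  fixes g :: "nat \<Rightarrow> ('d::finite \<Rightarrow> int) \<Rightarrow> complex" and h :: "('d \<Rightarrow> int) \<Rightarrow> complex"
  assumes "K \<ge> 1" "\<forall>k\<in>{1..K}. tempered (g k)"
    and "\<forall>n. \<exists>k\<in>{1..K}. cmod (h n) \<le> cmod (g k n)"
  shows "tempered h"
proof -
  have "\<forall>k\<in>{1..K}. \<exists>Mm. fst Mm > 0 \<and> (\<forall>n. cmod (g k n) \<le> fst Mm * (1 + l1norm n) ^ snd Mm)"
    using assms(2) unfolding tempered_def by force
  then obtain Mm where Mm: "\<forall>k\<in>{1..K}. fst (Mm k) > 0 \<and> (\<forall>n. cmod (g k n) \<le> fst (Mm k) * (1 + l1norm n) ^ snd (Mm k))"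
    by metis
  define M where "M = (\<Sum>k\<in>{1..K}. fst (Mm k))"
  define m where "m = Max ((\<lambda>k. snd (Mm k)) ` {1..K})"
  have Mpos: "M > 0" unfolding M_def
    using assms(1) Mm by (intro sum_pos) auto
  have "\<forall>n. cmod (h n) \<le> M * (1 + l1norm n) ^ m"
  proof
    fix n
    obtain k where k: "k \<in> {1..K}" "cmod (h n) \<le> cmod (g k n)" using assms(3) by blast
    have b1: "1 \<le> 1 + l1norm n" using l1norm_nonneg[of n] by simp
    have "snd (Mm k) \<le> m" unfolding m_def using k(1) by simp
    hence p: "(1 + l1norm n) ^ snd (Mm k) \<le> (1 + l1norm n) ^ m"
      using b1 by (simp add: power_increasing)
    have Mk: "fst (Mm k) \<le> M" unfolding M_def
      using k(1) Mm by (intro member_le_sum) (auto intro: less_imp_le)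
    have "cmod (h n) \<le> fst (Mm k) * (1 + l1norm n) ^ snd (Mm k)" using k Mm order_trans by meson
    also have "\<dots> \<le> M * (1 + l1norm n) ^ m"
      using p Mk Mm k(1) b1 Mpos by (intro mult_mono) auto
    finally show "cmod (h n) \<le> M * (1 + l1norm n) ^ m" .
  qed
  thus ?thesis unfolding tempered_def using Mpos by blast
qed

theorem proposition2p2:
  fixes K :: nat and f :: "nat \<Rightarrow> ('d::finite \<Rightarrow> int) \<Rightarrow> complex"
    and d :: "('d \<Rightarrow> int) \<Rightarrow> complex"
  assumes "K \<ge> 1"
    and "\<forall>k\<in>{1..K}. tempered (f k)"
    and "\<forall>n. d n = complex_of_real (Max ((\<lambda>k. cmod (f k n)) ` {1..K}))"
  shows "tempered d \<and> (\<forall>k\<in>{1..K}. sdvd d (f k))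
         \<and> (\<forall>e. tempered e \<and> (\<forall>k\<in>{1..K}. sdvd e (f k)) \<longrightarrow> sdvd e d)"
proof -
  have ne: "{1..K} \<noteq> {}" using assms(1) by simp
  have maxin: "\<And>n. \<exists>k\<in>{1..K}. Max ((\<lambda>k. cmod (f k n)) ` {1..K}) = cmod (f k n)"
  proof -
    fix n
    have "Max ((\<lambda>k. cmod (f k n)) ` {1..K}) \<in> (\<lambda>k. cmod (f k n)) ` {1..K}"
      using ne by (intro Max_in) auto
    thus "\<exists>k\<in>{1..K}. Max ((\<lambda>k. cmod (f k n)) ` {1..K}) = cmod (f k n)" by auto
  qed
  have dmod: "\<And>n. cmod (d n) = Max ((\<lambda>k. cmod (f k n)) ` {1..K})"
  proof -
    fix n
    obtain k where "k \<in> {1..K}" "Max ((\<lambda>k. cmod (f k n)) ` {1..K}) = cmod (f k n)"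
      using maxin by blast
    thus "cmod (d n) = Max ((\<lambda>k. cmod (f k n)) ` {1..K})" using assms(3) by simp
  qed
  have fle: "\<And>k n. k \<in> {1..K} \<Longrightarrow> cmod (f k n) \<le> cmod (d n)"
    unfolding dmod by (intro Max_ge) auto
  have T1: "tempered d"
    apply (rule tempered_dom[OF assms(1,2)])
    using maxin dmod by (metis order_refl)
  have one: "tempered (\<lambda>n::'d\<Rightarrow>int. c n)" if "\<forall>n. cmod (c n) \<le> 1" for c :: "('d\<Rightarrow>int) \<Rightarrow> complex"
    unfolding tempered_def by (rule exI[of _ 1], simp, rule exI[of _ 0]) (use that in auto)
  have T2: "\<forall>k\<in>{1..K}. sdvd d (f k)"
  proof
    fix k assume k: "k \<in> {1..K}"
    define c where "c n = (if d n = 0 then 0 else f k n / d n)" for n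
    have "\<forall>n. cmod (c n) \<le> 1"
    proof
      fix n show "cmod (c n) \<le> 1"
        using fle[OF k, of n] by (auto simp: c_def norm_divide divide_le_eq_1)
    qed
    moreover have "\<forall>n. f k n = d n * c n"
    proof
      fix n show "f k n = d n * c n"
        using fle[OF k, of n] by (auto simp: c_def)
    qed
    ultimately show "sdvd d (f k)" unfolding sdvd_def using one by blast
  qed
  have T3: "\<forall>e. tempered e \<and> (\<forall>k\<in>{1..K}. sdvd e (f k)) \<longrightarrow> sdvd e d"
  proof (intro allI impI)
    fix e assume H: "tempered e \<and> (\<forall>k\<in>{1..K}. sdvd e (f k))"
    have "\<forall>k\<in>{1..K}. \<exists>c. tempered c \<and> (\<forall>n. f k n = e n * c n)"
      using H unfolding sdvd_def by blast
    then obtain c where c: "\<forall>k\<in>{1..K}. tempered (c k) \<and> (\<forall>n. f k n = e n * c k n)"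
      by metis
    define q where "q n = (if e n = 0 then 0 else d n / e n)" for n
    have "tempered q"
    proof (rule tempered_dom[OF assms(1), of c])
      show "\<forall>k\<in>{1..K}. tempered (c k)" using c by blast
      show "\<forall>n. \<exists>k\<in>{1..K}. cmod (q n) \<le> cmod (c k n)"
      proof
        fix n
        obtain k where k: "k \<in> {1..K}" "cmod (d n) = cmod (f k n)" using maxin dmod by metis
        have "cmod (q n) \<le> cmod (c k n)"
        proof (cases "e n = 0")
          case True thus ?thesis by (simp add: q_def)
        next
          case False
          have "cmod (q n) = cmod (f k n) / cmod (e n)" using False k by (simp add: q_def norm_divide)
          also have "\<dots> = cmod (c k n)" using c k(1) False by (simp add: norm_mult)
          finally show ?thesis by simp
        qed
        thus "\<exists>k\<in>{1..K}. cmod (q n) \<le> cmod (c k n)" using k(1) by blast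
      qed
    qed
    moreover have "\<forall>n. d n = e n * q n"
    proof
      fix n
      show "d n = e n * q n"
      proof (cases "e n = 0")
        case True
        obtain k where k: "k \<in> {1..K}" "cmod (d n) = cmod (f k n)" using maxin dmod by metis
        have "f k n = 0" using c k(1) True by simp
        hence "d n = 0" using k by simp
        thus ?thesis using True by simp
      qed (simp add: q_def)
    qed
    ultimately show "sdvd e d" unfolding sdvd_def by blast
  qed
  show ?thesis using T1 T2 T3 by blast
qed

end
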